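(* Let $G=(U,V,E)$ be a bipartite graph, let $Y \subseteq V$, and let $X \subseteq U$ be such that $X$ is contained in some minimum-cardinality vertex cover of $G \setminus Y$. Then $X$ is contained in some minimum-cardinality vertex cover of $G$.
   Context: $G=(U,V,E)$ denotes a bipartite graph with vertex set $U\cup V$ and every edge having one end in $U$ and the other in $V$. $G\setminus Y$ denotes the graph obtained by deleting the vertices of $Y$. A vertex cover is a set of vertices incident to all edges. *)

theory Defs
  imports Main
begin

definition bipartite :: "'a set \<Rightarrow> 'a set \<Rightarrow> ('a \<times> 'a) set \<Rightarrow> bool" where
  "bipartite U V E \<longleftrightarrow> finite U \<and> finite V \<and> U \<inter> V = {} \<and> E \<subseteq> U \<times> V"

definition vertex_cover :: "'a set \<Rightarrow> 'a set \<Rightarrow> ('a \<times> 'a) set \<Rightarrow> 'a set \<Rightarrow> bool" where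
  "vertex_cover U V E C \<longleftrightarrow> C \<subseteq> U \<union> V \<and> (\<forall>(u, v) \<in> E. u \<in> C \<or> v \<in> C)"

definition min_vertex_cover :: "'a set \<Rightarrow> 'a set \<Rightarrow> ('a \<times> 'a) set \<Rightarrow> 'a set \<Rightarrow> bool" where
  "min_vertex_cover U V E C \<longleftrightarrow> vertex_cover U V E C \<and>
     (\<forall>C'. vertex_cover U V E C' \<longrightarrow> card C \<le> card C')"

text \<open>Edge set of G \<setminus> Y: edges with no endpoint in Y (vertex classes become U - Y, V - Y).\<close>
definition del_edges :: "('a \<times> 'a) set \<Rightarrow> 'a set \<Rightarrow> ('a \<times> 'a) set" where
  "del_edges E Y = {(u, v) \<in> E. u \<notin> Y \<and> v \<notin> Y}"

end

theory Submission
  imports Defs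
begin

lemma split_card:
  assumes "finite S" "S \<subseteq> U \<union> V" "U \<inter> V = {}"
  shows "card S = card (S \<inter> U) + card (S \<inter> V)"
proof -
  have "S = (S \<inter> U) \<union> (S \<inter> V)" using assms by blast
  moreover have "(S \<inter> U) \<inter> (S \<inter> V) = {}" using assms by blast
  ultimately show ?thesis using assms(1)
    by (metis card_Un_disjoint finite_Int)
qed

lemma lattice_card:
  assumes "finite U" "finite V" "U \<inter> V = {}" "S \<subseteq> U \<union> V" "T \<subseteq> U \<union> V"
  shows "card (((S \<union> T) \<inter> U) \<union> (S \<inter> T \<inter> V)) + card ((S \<inter> T \<inter> U) \<union> ((S \<union> T) \<inter> V))
         = card S + card T"
proof -
  have fS: "finite S" "finite T" using assms by (meson finite_UnI finite_subset)+
  have a: "card (((S \<union> T) \<inter> U) \<union> (S \<inter> T \<inter> V)) = card ((S \<union> T) \<inter> U) + card (S \<inter> T \<inter> V)"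
    by (rule card_Un_disjoint) (use assms fS in auto)
  have b: "card ((S \<inter> T \<inter> U) \<union> ((S \<union> T) \<inter> V)) = card (S \<inter> T \<inter> U) + card ((S \<union> T) \<inter> V)"
    by (rule card_Un_disjoint) (use assms fS in auto)
  have c: "card ((S \<union> T) \<inter> U) + card (S \<inter> T \<inter> U) = card (S \<inter> U) + card (T \<inter> U)"
  proof -
    have "(S \<union> T) \<inter> U = (S \<inter> U) \<union> (T \<inter> U)" "S \<inter> T \<inter> U = (S \<inter> U) \<inter> (T \<inter> U)" by auto
    then show ?thesis using card_Un_Int[of "S \<inter> U" "T \<inter> U"] fS by simp
  qed
  have d: "card ((S \<union> T) \<inter> V) + card (S \<inter> T \<inter> V) = card (S \<inter> V) + card (T \<inter> V)"
  proof -
    have "(S \<union> T) \<inter> V = (S \<inter> V) \<union> (T \<inter> V)" "S \<inter> T \<inter> V = (S \<inter> V) \<inter> (T \<inter> V)" by auto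
    then show ?thesis using card_Un_Int[of "S \<inter> V" "T \<inter> V"] fS by simp
  qed
  show ?thesis using a b c d split_card[OF fS(1) assms(4) assms(3)] split_card[OF fS(2) assms(5) assms(3)]
    by linarith
qed

theorem lemma6:
  fixes U V :: "'a set" and E :: "('a \<times> 'a) set" and X Y :: "'a set"
  assumes "bipartite U V E"
    and "Y \<subseteq> V"
    and "X \<subseteq> U"
    and "\<exists>C. min_vertex_cover (U - Y) (V - Y) (del_edges E Y) C \<and> X \<subseteq> C"
  shows "\<exists>C. min_vertex_cover U V E C \<and> X \<subseteq> C"
proof -
  have bip: "finite U" "finite V" "U \<inter> V = {}" "E \<subseteq> U \<times> V" using assms(1) unfolding bipartite_def by auto
  obtain C' where C'm: "min_vertex_cover (U - Y) (V - Y) (del_edges E Y) C'" and XC: "X \<subseteq> C'"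
    using assms(4) by blast
  have C'vc: "vertex_cover (U - Y) (V - Y) (del_edges E Y) C'" using C'm unfolding min_vertex_cover_def by auto
  have vcUV: "vertex_cover U V E (U \<union> V)" unfolding vertex_cover_def using bip by auto
  obtain C where Cvc: "vertex_cover U V E C" and Cmin: "\<forall>D. vertex_cover U V E D \<longrightarrow> card C \<le> card D"
    using ex_has_least_nat[of "vertex_cover U V E" "U \<union> V" card] vcUV by blast
  define C'' where "C'' = C' \<union> Y"
  have C''vc: "vertex_cover U V E C''"
    using C'vc assms(2) unfolding vertex_cover_def C''_def del_edges_def by auto
  define M1 where "M1 = ((C \<union> C'') \<inter> U) \<union> (C \<inter> C'' \<inter> V)"
  define M2 where "M2 = (C \<inter> C'' \<inter> U) \<union> ((C \<union> C'') \<inter> V)"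
  have CUV: "C \<subseteq> U \<union> V" "C'' \<subseteq> U \<union> V" using Cvc C''vc unfolding vertex_cover_def by auto
  have sum: "card M1 + card M2 = card C + card C''"
    unfolding M1_def M2_def by (rule lattice_card[OF bip(1-3) CUV])
  have M1vc: "vertex_cover U V E M1"
    using Cvc C''vc bip(4) unfolding vertex_cover_def M1_def by fastforce
  have M2vc: "vertex_cover U V E M2"
    using Cvc C''vc bip(4) unfolding vertex_cover_def M2_def by fastforce
  have YM2: "Y \<subseteq> M2" using assms(2) unfolding M2_def C''_def by auto
  have M2Y: "vertex_cover (U - Y) (V - Y) (del_edges E Y) (M2 - Y)"
    using M2vc unfolding vertex_cover_def del_edges_def by fastforce
  have fin: "finite (U \<union> V)" using bip by auto
  have fM2: "finite M2" using M2vc fin unfolding vertex_cover_def by (meson finite_subset)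
  have "card C' \<le> card (M2 - Y)" using C'm M2Y unfolding min_vertex_cover_def by blast
  moreover have "card M2 = card (M2 - Y) + card Y"
    using YM2 fM2 by (metis card_Diff_subset card_mono diff_add finite_subset)
  moreover have "card C'' = card C' + card Y"
  proof -
    have "C' \<inter> Y = {}" using C'vc unfolding vertex_cover_def by auto
    moreover have "finite C'" "finite Y" using C'vc fin assms(2) bip unfolding vertex_cover_def
      by (meson Diff_subset finite_subset le_supI1 le_supI2 sup.mono order_trans)+
    ultimately show ?thesis unfolding C''_def by (simp add: card_Un_disjoint)
  qed
  ultimately have "card C'' \<le> card M2" by linarith
  with sum have "card M1 \<le> card C" by linarith
  with Cmin have "min_vertex_cover U V E M1" using M1vc unfolding min_vertex_cover_def by fastforce
  moreover have "X \<subseteq> M1" using XC assms(3) unfolding M1_def C''_def by auto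
  ultimately show ?thesis by blast
qed

end
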